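(* Fix an index $j$. Define $R_{j,0}(\mathbf t;x)=\mathcal D(\mathbf t;x)$ and $R_{j,k+1}(\mathbf t;x)=\frac{\partial}{\partial t_j}R_{j,k}(\mathbf t;x)+[R_{j,k}(\mathbf t;x),R_j(\mathbf t;x)]$. Then there exist coefficients $\alpha_{j,k,1}(\mathbf t;x)$, $k=0,\dots,\dim\mathfrak g$, polynomial in $x$ and not all zero, such that $\sum_k\alpha_{j,k,1}R_{j,k}=0$ and, for every $E\in\mathfrak g$, $$\sum_{k=0}^{\dim\mathfrak g}\alpha_{j,k,1}(\mathbf t;x)\frac{\partial^k}{\partial t_j^k}W_1(\mathbf t;x.E)=0.$$
   Context: Let $G\subset GL(r,\mathbb C)$ be a complex reductive Lie group given in a faithful matrix representation, with Lie algebra $\mathfrak g\subset\mathfrak{gl}(r,\mathbb C)$; ${\rm Tr}$ is the matrix trace. Let $\mathbf t=(t_1,t_2,\dots)$ be parameters ("times") in an open set. Let $\mathcal D(\mathbf t;x)$ and $R_k(\mathbf t;x)$ be $\mathfrak g$-valued, rational in $x$ (arbitrary smooth/holomorphic dependence on $\mathbf t$), and let $\Psi(\mathbf t;x)$ be an invertible $G$-valued common solution of $\frac{\partial}{\partial x}\Psi=\mathcal D\Psi$ and $\frac{\partial}{\partial t_k}\Psi=R_k\Psi$ for all $k$. For $E\in\mathfrak g$ set $M(\mathbf t;x.E)=\Psi(\mathbf t;x)E\Psi(\mathbf t;x)^{-1}$ and $W_1(\mathbf t;x.E)={\rm Tr}\,\mathcal D(\mathbf t;x)M(\mathbf t;x.E)$.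 *)

theory Defs
  imports "HOL-Analysis.Analysis" "HOL-Computational_Algebra.Polynomial"
begin

type_synonym 'n cmat = "complex^'n^'n"

definition cmscale :: "complex \<Rightarrow> 'n::finite cmat \<Rightarrow> 'n cmat" where
  "cmscale c A = (\<chi> i j. c * A$i$j)"

global_interpretation cmat: vector_space "cmscale :: complex \<Rightarrow> 'n::finite cmat \<Rightarrow> 'n cmat"
  defines cmat_dim = "cmat.dim" and cmat_subspace = "cmat.subspace"
  by unfold_locales (simp_all add: cmscale_def vec_eq_iff algebra_simps)

definition mcomm :: "'n::finite cmat \<Rightarrow> 'n cmat \<Rightarrow> 'n cmat" where
  "mcomm A B = A ** B - B ** A"

primrec mpow :: "'n::finite cmat \<Rightarrow> nat \<Rightarrow> 'n cmat" where
  "mpow A 0 = mat 1"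
| "mpow A (Suc k) = A ** mpow A k"

definition mexp :: "'n::finite cmat \<Rightarrow> 'n cmat" where
  "mexp A = (\<Sum>k. (1 / fact k) *\<^sub>R mpow A k)"

definition matrix_group :: "'n::finite cmat set \<Rightarrow> bool" where
  "matrix_group G \<longleftrightarrow> G \<subseteq> {A. invertible A} \<and> mat 1 \<in> G \<and>
     (\<forall>A\<in>G. \<forall>B\<in>G. A ** B \<in> G) \<and> (\<forall>A\<in>G. matrix_inv A \<in> G)"

definition lie_algebra_of :: "'n::finite cmat set \<Rightarrow> 'n cmat set" where
  "lie_algebra_of G = {X. \<forall>s::complex. mexp (cmscale s X) \<in> G}"

definition lie_subalgebra :: "'n::finite cmat set \<Rightarrow> bool" where
  "lie_subalgebra g \<longleftrightarrow> cmat_subspace g \<and> (\<forall>A\<in>g. \<forall>B\<in>g. mcomm A B \<in> g)"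

definition lie_ideal :: "'n::finite cmat set \<Rightarrow> 'n cmat set \<Rightarrow> bool" where
  "lie_ideal I g \<longleftrightarrow> cmat_subspace I \<and> I \<subseteq> g \<and> (\<forall>A\<in>g. \<forall>B\<in>I. mcomm A B \<in> I)"

text \<open>Reductive Lie algebra: every ideal has a complementary ideal
  (equivalently, the adjoint representation is completely reducible).\<close>
definition reductive_lie_algebra :: "'n::finite cmat set \<Rightarrow> bool" where
  "reductive_lie_algebra g \<longleftrightarrow> lie_subalgebra g \<and>
     (\<forall>I. lie_ideal I g \<longrightarrow> (\<exists>J. lie_ideal J g \<and> I \<inter> J = {0} \<and>
          {a + b | a b. a \<in> I \<and> b \<in> J} = g))"

definition reductive_matrix_group :: "'n::finite cmat set \<Rightarrow> 'n cmat set \<Rightarrow> bool" where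
  "reductive_matrix_group G g \<longleftrightarrow> matrix_group G \<and> g = lie_algebra_of G \<and> reductive_lie_algebra g"

definition mat_has_deriv :: "(complex \<Rightarrow> 'n::finite cmat) \<Rightarrow> 'n cmat \<Rightarrow> complex \<Rightarrow> bool" where
  "mat_has_deriv F D s \<longleftrightarrow> (\<forall>a b. ((\<lambda>z. F z $ a $ b) has_field_derivative D $ a $ b) (at s))"

definition pderiv_t :: "'m \<Rightarrow> (('m \<Rightarrow> complex) \<Rightarrow> 'n::finite cmat) \<Rightarrow> ('m \<Rightarrow> complex) \<Rightarrow> 'n cmat" where
  "pderiv_t j F t = (\<chi> a b. deriv (\<lambda>s. F (t(j := s)) $ a $ b) (t j))"

definition pderiv_t_iter :: "'m \<Rightarrow> nat \<Rightarrow> (('m \<Rightarrow> complex) \<Rightarrow> complex) \<Rightarrow> ('m \<Rightarrow> complex) \<Rightarrow> complex" where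
  "pderiv_t_iter j k f t = (deriv ^^ k) (\<lambda>s. f (t(j := s))) (t j)"

primrec Rjk :: "(('m \<Rightarrow> complex) \<Rightarrow> complex \<Rightarrow> 'n::finite cmat) \<Rightarrow>
    ('m \<Rightarrow> ('m \<Rightarrow> complex) \<Rightarrow> complex \<Rightarrow> 'n cmat) \<Rightarrow> 'm \<Rightarrow> nat \<Rightarrow>
    ('m \<Rightarrow> complex) \<Rightarrow> complex \<Rightarrow> 'n cmat" where
  "Rjk D R j 0 = D"
| "Rjk D R j (Suc k) = (\<lambda>t x. pderiv_t j (\<lambda>t'. Rjk D R j k t' x) t + mcomm (Rjk D R j k t x) (R j t x))"

definition rational_in_x :: "('m \<Rightarrow> complex) set \<Rightarrow> complex set \<Rightarrow>
    (('m \<Rightarrow> complex) \<Rightarrow> complex \<Rightarrow> 'n::finite cmat) \<Rightarrow> bool" where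
  "rational_in_x T X F \<longleftrightarrow> (\<exists>N::nat. \<forall>a b. \<exists>p q :: nat \<Rightarrow> ('m \<Rightarrow> complex) \<Rightarrow> complex.
      (\<forall>i k. \<forall>t\<in>T. (\<lambda>s. p i (t(k := s))) holomorphic_on {s. t(k := s) \<in> T} \<and>
                     (\<lambda>s. q i (t(k := s))) holomorphic_on {s. t(k := s) \<in> T}) \<and>
      (\<forall>t\<in>T. \<forall>x\<in>X. (\<Sum>i\<le>N. q i t * x ^ i) \<noteq> 0 \<and>
          F t x $ a $ b = (\<Sum>i\<le>N. p i t * x ^ i) / (\<Sum>i\<le>N. q i t * x ^ i)))"

definition holo_in_t :: "('m \<Rightarrow> complex) set \<Rightarrow> complex set \<Rightarrow>
    (('m \<Rightarrow> complex) \<Rightarrow> complex \<Rightarrow> 'n::finite cmat) \<Rightarrow> bool" where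
  "holo_in_t T X F \<longleftrightarrow> (\<forall>t\<in>T. \<forall>x\<in>X. \<forall>k a b.
      (\<lambda>s. F (t(k := s)) x $ a $ b) holomorphic_on {s. t(k := s) \<in> T})"

definition Mfun :: "(('m \<Rightarrow> complex) \<Rightarrow> complex \<Rightarrow> 'n::finite cmat) \<Rightarrow> ('m \<Rightarrow> complex) \<Rightarrow> complex \<Rightarrow> 'n cmat \<Rightarrow> 'n cmat" where
  "Mfun Psi t x E = Psi t x ** E ** matrix_inv (Psi t x)"

definition W1 :: "(('m \<Rightarrow> complex) \<Rightarrow> complex \<Rightarrow> 'n::finite cmat) \<Rightarrow>
    (('m \<Rightarrow> complex) \<Rightarrow> complex \<Rightarrow> 'n cmat) \<Rightarrow> ('m \<Rightarrow> complex) \<Rightarrow> complex \<Rightarrow> 'n cmat \<Rightarrow> complex" where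
  "W1 D Psi t x E = trace (D t x ** Mfun Psi t x E)"

end

theory Submission
  imports Defs "HOL-Complex_Analysis.Complex_Analysis" "HOL-Library.Function_Algebras"
begin


no_notation fps_nth (infixl \<open>$\<close> 75)


definition hpoly :: "complex set \<Rightarrow> (complex \<Rightarrow> complex poly) \<Rightarrow> bool" where
  "hpoly S P \<longleftrightarrow> (\<exists>D. \<forall>s\<in>S. degree (P s) \<le> D) \<and> (\<forall>i. (\<lambda>s. coeff (P s) i) holomorphic_on S)"

lemma hpoly_const: "hpoly S (\<lambda>s. p)"
  unfolding hpoly_def by auto

lemma hpoly_add: "hpoly S P \<Longrightarrow> hpoly S Q \<Longrightarrow> hpoly S (\<lambda>s. P s + Q s)"
  unfolding hpoly_def
proof (elim conjE exE, intro conjI allI)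
  fix D1 D2 assume "\<forall>s\<in>S. degree (P s) \<le> D1" "\<forall>s\<in>S. degree (Q s) \<le> D2"
  then show "\<exists>D. \<forall>s\<in>S. degree (P s + Q s) \<le> D"
    by (metis degree_add_le max.cobounded1 max.cobounded2 order_trans)
next
  fix i assume "\<forall>i. (\<lambda>s. coeff (P s) i) holomorphic_on S" "\<forall>i. (\<lambda>s. coeff (Q s) i) holomorphic_on S"
  then show "(\<lambda>s. coeff (P s + Q s) i) holomorphic_on S"
    by (simp add: holomorphic_on_add)
qed

lemma hpoly_diff: "hpoly S P \<Longrightarrow> hpoly S Q \<Longrightarrow> hpoly S (\<lambda>s. P s - Q s)"
  unfolding hpoly_def
proof (elim conjE exE, intro conjI allI)
  fix D1 D2 assume "\<forall>s\<in>S. degree (P s) \<le> D1" "\<forall>s\<in>S. degree (Q s) \<le> D2"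
  then show "\<exists>D. \<forall>s\<in>S. degree (P s - Q s) \<le> D"
    by (metis degree_diff_le max.cobounded1 max.cobounded2 order_trans)
next
  fix i assume "\<forall>i. (\<lambda>s. coeff (P s) i) holomorphic_on S" "\<forall>i. (\<lambda>s. coeff (Q s) i) holomorphic_on S"
  then show "(\<lambda>s. coeff (P s - Q s) i) holomorphic_on S"
    by (simp add: holomorphic_on_diff)
qed

lemma hpoly_mult: "hpoly S P \<Longrightarrow> hpoly S Q \<Longrightarrow> hpoly S (\<lambda>s. P s * Q s)"
  unfolding hpoly_def
proof (elim conjE exE, intro conjI allI)
  fix D1 D2 assume "\<forall>s\<in>S. degree (P s) \<le> D1" "\<forall>s\<in>S. degree (Q s) \<le> D2"
  then show "\<exists>D. \<forall>s\<in>S. degree (P s * Q s) \<le> D"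
    by (metis add_mono degree_mult_le order_trans)
next
  fix i assume "\<forall>i. (\<lambda>s. coeff (P s) i) holomorphic_on S" "\<forall>i. (\<lambda>s. coeff (Q s) i) holomorphic_on S"
  then show "(\<lambda>s. coeff (P s * Q s) i) holomorphic_on S"
    by (simp add: coeff_mult holomorphic_on_sum holomorphic_on_mult)
qed

lemma poly_sum_le: fixes p :: "complex poly" shows "degree p \<le> D \<Longrightarrow> poly p x = (\<Sum>i\<le>D. coeff p i * x ^ i)"
proof -
  assume a: "degree p \<le> D"
  have "poly p x = (\<Sum>i\<le>degree p. coeff p i * x ^ i)" by (rule Polynomial.poly_altdef)
  also have "\<dots> = (\<Sum>i\<le>D. coeff p i * x ^ i)"
    using a by (intro sum.mono_neutral_left) (auto simp: coeff_eq_0)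
  finally show ?thesis .
qed

lemma hpoly_holo: "hpoly S P \<Longrightarrow> (\<lambda>s. poly (P s) x) holomorphic_on S"
proof -
  assume "hpoly S P"
  then obtain D where D: "\<forall>s\<in>S. degree (P s) \<le> D" and h: "\<forall>i. (\<lambda>s. coeff (P s) i) holomorphic_on S"
    unfolding hpoly_def by blast
  have "(\<lambda>s. \<Sum>i\<le>D. coeff (P s) i * x ^ i) holomorphic_on S"
    using h by (intro holomorphic_on_sum holomorphic_on_mult holomorphic_on_const) auto
  then show ?thesis
    by (rule holomorphic_transform) (simp add: D poly_sum_le[of "P _" D])
qed

lemma hpoly_deriv:
  assumes "open S" "hpoly S P"
  shows "\<exists>P'. hpoly S P' \<and> (\<forall>s\<in>S. \<forall>x. ((\<lambda>s. poly (P s) x) has_field_derivative poly (P' s) x) (at s))"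
proof -
  obtain D where D: "\<forall>s\<in>S. degree (P s) \<le> D" and h: "\<forall>i. (\<lambda>s. coeff (P s) i) holomorphic_on S"
    using assms unfolding hpoly_def by blast
  define P' where "P' s = (\<Sum>i\<le>D. monom (deriv (\<lambda>s. coeff (P s) i) s) i)" for s
  have cP': "coeff (P' s) i = (if i \<le> D then deriv (\<lambda>s. coeff (P s) i) s else 0)" for s i
    unfolding P'_def coeff_sum coeff_monom by (simp add: sum.delta)
  have "hpoly S P'"
    unfolding hpoly_def
  proof (intro conjI allI exI ballI)
    fix s show "degree (P' s) \<le> D"
      unfolding P'_def
    proof (rule degree_sum_le)
      fix i assume "i \<in> {..D}"
      then show "degree (monom (deriv (\<lambda>s. coeff (P s) i) s) i) \<le> D"
        using degree_monom_le[of "deriv (\<lambda>s. coeff (P s) i) s" i] by simp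
    qed simp
  next
    fix i show "(\<lambda>s. coeff (P' s) i) holomorphic_on S"
    proof (cases "i \<le> D")
      case True
      then show ?thesis unfolding cP' using holomorphic_deriv[OF h[rule_format, of i] assms(1)] by simp
    qed (simp add: cP')
  qed
  moreover have "((\<lambda>s. poly (P s) x) has_field_derivative poly (P' s) x) (at s)" if "s \<in> S" for s x
  proof -
    have d1: "((\<lambda>s. \<Sum>i\<le>D. coeff (P s) i * x ^ i) has_field_derivative (\<Sum>i\<le>D. deriv (\<lambda>s. coeff (P s) i) s * x ^ i)) (at s)"
    proof (rule DERIV_sum)
      fix i
      show "((\<lambda>s. coeff (P s) i * x ^ i) has_field_derivative deriv (\<lambda>s. coeff (P s) i) s * x ^ i) (at s)"
        by (rule DERIV_cmult_right, rule holomorphic_derivI[OF h[rule_format, of i] assms(1) that])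
    qed
    have d2: "poly (P' s) x = (\<Sum>i\<le>D. deriv (\<lambda>s. coeff (P s) i) s * x ^ i)"
      unfolding P'_def poly_sum poly_monom by (rule refl)
    have d3: "(\<Sum>i\<le>D. coeff (P s') i * x ^ i) = poly (P s') x" if "s' \<in> S" for s'
      using poly_sum_le[of "P s'" D x, OF D[rule_format, OF that]] by (rule sym)
    show ?thesis
    proof (rule has_field_derivative_transform_within_open[OF _ assms(1) that])
      show "((\<lambda>s. \<Sum>i\<le>D. coeff (P s) i * x ^ i) has_field_derivative poly (P' s) x) (at s)"
        unfolding d2 by (rule d1)
      show "\<And>s'. s' \<in> S \<Longrightarrow> (\<Sum>i\<le>D. coeff (P s') i * x ^ i) = poly (P s') x" by (rule d3)
    qed
  qed
  ultimately show ?thesis by blast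
qed



definition ratf :: "complex set \<Rightarrow> complex set \<Rightarrow> (complex \<Rightarrow> complex \<Rightarrow> complex) \<Rightarrow> bool" where
  "ratf S X F \<longleftrightarrow> (\<exists>P Q. hpoly S P \<and> hpoly S Q \<and>
     (\<forall>s\<in>S. \<forall>x\<in>X. poly (Q s) x \<noteq> 0 \<and> F s x = poly (P s) x / poly (Q s) x))"

lemma ratf_zero: "ratf S X (\<lambda>s x. 0)"
  unfolding ratf_def by (rule exI[of _ "\<lambda>s. 0"], rule exI[of _ "\<lambda>s. 1"]) (simp add: hpoly_const)

lemma ratf_add:
  assumes "ratf S X F" "ratf S X G" shows "ratf S X (\<lambda>s x. F s x + G s x)"
proof -
  obtain P Q where PQ: "hpoly S P" "hpoly S Q" "\<forall>s\<in>S. \<forall>x\<in>X. poly (Q s) x \<noteq> 0 \<and> F s x = poly (P s) x / poly (Q s) x"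
    using assms(1) unfolding ratf_def by blast
  obtain P2 Q2 where PQ2: "hpoly S P2" "hpoly S Q2" "\<forall>s\<in>S. \<forall>x\<in>X. poly (Q2 s) x \<noteq> 0 \<and> G s x = poly (P2 s) x / poly (Q2 s) x"
    using assms(2) unfolding ratf_def by blast
  show ?thesis unfolding ratf_def
  proof (intro exI conjI ballI)
    show "hpoly S (\<lambda>s. P s * Q2 s + P2 s * Q s)" using PQ PQ2 by (intro hpoly_add hpoly_mult)
    show "hpoly S (\<lambda>s. Q s * Q2 s)" using PQ PQ2 by (intro hpoly_mult)
    fix s x assume sx: "s \<in> S" "x \<in> X"
    then have q: "poly (Q s) x \<noteq> 0" "poly (Q2 s) x \<noteq> 0" using PQ(3) PQ2(3) by auto
    then show "poly (Q s * Q2 s) x \<noteq> 0" by simp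
    show "F s x + G s x = poly (P s * Q2 s + P2 s * Q s) x / poly (Q s * Q2 s) x"
      using PQ(3) PQ2(3) sx q by (simp add: add_frac_eq)
  qed
qed

lemma ratf_diff:
  assumes "ratf S X F" "ratf S X G" shows "ratf S X (\<lambda>s x. F s x - G s x)"
proof -
  obtain P Q where PQ: "hpoly S P" "hpoly S Q" "\<forall>s\<in>S. \<forall>x\<in>X. poly (Q s) x \<noteq> 0 \<and> F s x = poly (P s) x / poly (Q s) x"
    using assms(1) unfolding ratf_def by blast
  obtain P2 Q2 where PQ2: "hpoly S P2" "hpoly S Q2" "\<forall>s\<in>S. \<forall>x\<in>X. poly (Q2 s) x \<noteq> 0 \<and> G s x = poly (P2 s) x / poly (Q2 s) x"
    using assms(2) unfolding ratf_def by blast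
  show ?thesis unfolding ratf_def
  proof (intro exI conjI ballI)
    show "hpoly S (\<lambda>s. P s * Q2 s - P2 s * Q s)" using PQ PQ2 by (intro hpoly_diff hpoly_mult)
    show "hpoly S (\<lambda>s. Q s * Q2 s)" using PQ PQ2 by (intro hpoly_mult)
    fix s x assume sx: "s \<in> S" "x \<in> X"
    then have q: "poly (Q s) x \<noteq> 0" "poly (Q2 s) x \<noteq> 0" using PQ(3) PQ2(3) by auto
    then show "poly (Q s * Q2 s) x \<noteq> 0" by simp
    show "F s x - G s x = poly (P s * Q2 s - P2 s * Q s) x / poly (Q s * Q2 s) x"
      using PQ(3) PQ2(3) sx q by (simp add: diff_frac_eq)
  qed
qed

lemma ratf_mult:
  assumes "ratf S X F" "ratf S X G" shows "ratf S X (\<lambda>s x. F s x * G s x)"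
proof -
  obtain P Q where PQ: "hpoly S P" "hpoly S Q" "\<forall>s\<in>S. \<forall>x\<in>X. poly (Q s) x \<noteq> 0 \<and> F s x = poly (P s) x / poly (Q s) x"
    using assms(1) unfolding ratf_def by blast
  obtain P2 Q2 where PQ2: "hpoly S P2" "hpoly S Q2" "\<forall>s\<in>S. \<forall>x\<in>X. poly (Q2 s) x \<noteq> 0 \<and> G s x = poly (P2 s) x / poly (Q2 s) x"
    using assms(2) unfolding ratf_def by blast
  show ?thesis unfolding ratf_def
  proof (intro exI conjI ballI)
    show "hpoly S (\<lambda>s. P s * P2 s)" using PQ PQ2 by (intro hpoly_mult)
    show "hpoly S (\<lambda>s. Q s * Q2 s)" using PQ PQ2 by (intro hpoly_mult)
    fix s x assume sx: "s \<in> S" "x \<in> X"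
    then have q: "poly (Q s) x \<noteq> 0" "poly (Q2 s) x \<noteq> 0" using PQ(3) PQ2(3) by auto
    then show "poly (Q s * Q2 s) x \<noteq> 0" by simp
    show "F s x * G s x = poly (P s * P2 s) x / poly (Q s * Q2 s) x"
      using PQ(3) PQ2(3) sx q by simp
  qed
qed

lemma ratf_sum:
  assumes "finite I" "\<And>i. i \<in> I \<Longrightarrow> ratf S X (F i)" shows "ratf S X (\<lambda>s x. \<Sum>i\<in>I. F i s x)"
  using assms
proof (induction I rule: finite_induct)
  case empty then show ?case by (simp add: ratf_zero)
next
  case (insert a I)
  then show ?case by (simp add: ratf_add)
qed

lemma ratf_holo:
  assumes "ratf S X F" "x \<in> X" shows "(\<lambda>s. F s x) holomorphic_on S"
proof -
  obtain P Q where PQ: "hpoly S P" "hpoly S Q" "\<forall>s\<in>S. \<forall>x\<in>X. poly (Q s) x \<noteq> 0 \<and> F s x = poly (P s) x / poly (Q s) x"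
    using assms(1) unfolding ratf_def by blast
  have "(\<lambda>s. poly (P s) x / poly (Q s) x) holomorphic_on S"
    using PQ assms(2) by (intro holomorphic_on_divide hpoly_holo) auto
  then show ?thesis
    by (rule holomorphic_transform) (use PQ assms(2) in auto)
qed

lemma ratf_has_deriv:
  assumes "open S" "ratf S X F" "x \<in> X" "s \<in> S"
  shows "((\<lambda>s. F s x) has_field_derivative deriv (\<lambda>s. F s x) s) (at s)"
  using holomorphic_derivI[OF ratf_holo[OF assms(2,3)] assms(1,4)] .

lemma ratf_deriv:
  assumes "open S" "ratf S X F"
  shows "ratf S X (\<lambda>s x. deriv (\<lambda>s. F s x) s)"
proof -
  obtain P Q where PQ: "hpoly S P" "hpoly S Q" "\<forall>s\<in>S. \<forall>x\<in>X. poly (Q s) x \<noteq> 0 \<and> F s x = poly (P s) x / poly (Q s) x"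
    using assms(2) unfolding ratf_def by blast
  obtain P' where P': "hpoly S P'" "\<forall>s\<in>S. \<forall>x. ((\<lambda>s. poly (P s) x) has_field_derivative poly (P' s) x) (at s)"
    using hpoly_deriv[OF assms(1) PQ(1)] by blast
  obtain Q' where Q': "hpoly S Q'" "\<forall>s\<in>S. \<forall>x. ((\<lambda>s. poly (Q s) x) has_field_derivative poly (Q' s) x) (at s)"
    using hpoly_deriv[OF assms(1) PQ(2)] by blast
  have d: "deriv (\<lambda>s. F s x) s = poly (P' s * Q s - P s * Q' s) x / poly (Q s * Q s) x"
    if "s \<in> S" "x \<in> X" for s x
  proof -
    have "((\<lambda>s. poly (P s) x / poly (Q s) x) has_field_derivative
        (poly (P' s) x * poly (Q s) x - poly (P s) x * poly (Q' s) x) / (poly (Q s) x * poly (Q s) x)) (at s)"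
      using PQ(3) that by (intro DERIV_divide[OF P'(2)[rule_format, OF that(1)] Q'(2)[rule_format, OF that(1)]]) simp
    then have "((\<lambda>s. F s x) has_field_derivative
        (poly (P' s) x * poly (Q s) x - poly (P s) x * poly (Q' s) x) / (poly (Q s) x * poly (Q s) x)) (at s)"
    proof (rule has_field_derivative_transform_within_open[OF _ assms(1) that(1)])
      fix s' assume "s' \<in> S" then show "poly (P s') x / poly (Q s') x = F s' x" using PQ(3) that(2) by simp
    qed
    from DERIV_imp_deriv[OF this] show ?thesis by (simp only: poly_mult poly_diff)
  qed
  show ?thesis unfolding ratf_def
  proof (intro exI conjI ballI)
    show "hpoly S (\<lambda>s. P' s * Q s - P s * Q' s)" using PQ P' Q' by (intro hpoly_diff hpoly_mult)
    show "hpoly S (\<lambda>s. Q s * Q s)" using PQ by (intro hpoly_mult)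
    fix s x assume sx: "s \<in> S" "x \<in> X"
    then show "poly (Q s * Q s) x \<noteq> 0" using PQ(3) by simp
    show "deriv (\<lambda>s. F s x) s = poly (P' s * Q s - P s * Q' s) x / poly (Q s * Q s) x"
      using d sx .
  qed
qed



definition ratm :: "complex set \<Rightarrow> complex set \<Rightarrow> (complex \<Rightarrow> complex \<Rightarrow> 'n::finite cmat) \<Rightarrow> bool" where
  "ratm S X F \<longleftrightarrow> (\<forall>a b. ratf S X (\<lambda>s x. F s x $ a $ b))"

lemma ratm_add: "ratm S X F \<Longrightarrow> ratm S X G \<Longrightarrow> ratm S X (\<lambda>s x. F s x + G s x)"
  unfolding ratm_def by (simp add: ratf_add)

lemma ratm_diff: "ratm S X F \<Longrightarrow> ratm S X G \<Longrightarrow> ratm S X (\<lambda>s x. F s x - G s x)"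
  unfolding ratm_def by (simp add: ratf_diff)

lemma ratm_mult: "ratm S X F \<Longrightarrow> ratm S X G \<Longrightarrow> ratm S X (\<lambda>s x. F s x ** G s x)"
  unfolding ratm_def matrix_matrix_mult_def
  by (simp add: ratf_sum ratf_mult)

lemma ratm_mcomm: "ratm S X F \<Longrightarrow> ratm S X G \<Longrightarrow> ratm S X (\<lambda>s x. mcomm (F s x) (G s x))"
  unfolding mcomm_def by (intro ratm_diff ratm_mult)

lemma ratm_deriv: "open S \<Longrightarrow> ratm S X F \<Longrightarrow> ratm S X (\<lambda>s x. \<chi> a b. deriv (\<lambda>s. F s x $ a $ b) s)"
  unfolding ratm_def by (simp add: ratf_deriv)

lemma ratm_has_deriv:
  assumes "open S" "ratm S X F" "x \<in> X" "s \<in> S"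
  shows "((\<lambda>s. F s x $ a $ b) has_field_derivative (\<chi> a b. deriv (\<lambda>s. F s x $ a $ b) s) $ a $ b) (at s)"
  using ratf_has_deriv[OF assms(1) _ assms(3,4), of "\<lambda>s x. F s x $ a $ b"] assms(2)
  unfolding ratm_def by simp

lemma ratm_base:
  assumes "rational_in_x T X F" "t0 \<in> T"
  shows "ratm {s. t0(j := s) \<in> T} X (\<lambda>s x. F (t0(j := s)) x)"
  unfolding ratm_def
proof (intro allI)
  fix a b
  obtain N where N: "\<forall>a b. \<exists>p q :: nat \<Rightarrow> ('a \<Rightarrow> complex) \<Rightarrow> complex.
      (\<forall>i k. \<forall>t\<in>T. (\<lambda>s. p i (t(k := s))) holomorphic_on {s. t(k := s) \<in> T} \<and>
                     (\<lambda>s. q i (t(k := s))) holomorphic_on {s. t(k := s) \<in> T}) \<and>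
      (\<forall>t\<in>T. \<forall>x\<in>X. (\<Sum>i\<le>N. q i t * x ^ i) \<noteq> 0 \<and>
          F t x $ a $ b = (\<Sum>i\<le>N. p i t * x ^ i) / (\<Sum>i\<le>N. q i t * x ^ i))"
    using assms(1) unfolding rational_in_x_def by blast
  then obtain p q :: "nat \<Rightarrow> ('a \<Rightarrow> complex) \<Rightarrow> complex" where
    hol: "\<forall>i k. \<forall>t\<in>T. (\<lambda>s. p i (t(k := s))) holomorphic_on {s. t(k := s) \<in> T} \<and>
                     (\<lambda>s. q i (t(k := s))) holomorphic_on {s. t(k := s) \<in> T}" and
    eq: "\<forall>t\<in>T. \<forall>x\<in>X. (\<Sum>i\<le>N. q i t * x ^ i) \<noteq> 0 \<and>
          F t x $ a $ b = (\<Sum>i\<le>N. p i t * x ^ i) / (\<Sum>i\<le>N. q i t * x ^ i)"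
    by blast
  let ?S = "{s. t0(j := s) \<in> T}"
  have hp: "hpoly ?S (\<lambda>s. \<Sum>i\<le>N. monom (c i (t0(j := s))) i)"
    if hc: "\<And>i. (\<lambda>s. c i (t0(j := s))) holomorphic_on ?S" for c :: "nat \<Rightarrow> ('a \<Rightarrow> complex) \<Rightarrow> complex"
    unfolding hpoly_def
  proof (intro conjI allI exI ballI)
    fix s show "degree (\<Sum>i\<le>N. monom (c i (t0(j := s))) i) \<le> N"
    proof (rule degree_sum_le)
      fix i assume "i \<in> {..N}"
      then show "degree (monom (c i (t0(j := s))) i) \<le> N"
        using degree_monom_le[of "c i (t0(j := s))" i] by simp
    qed simp
  next
    fix i
    have "coeff (\<Sum>i\<le>N. monom (c i (t0(j := s))) i) i = (if i \<le> N then c i (t0(j := s)) else 0)" for s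
      unfolding coeff_sum coeff_monom by (simp add: sum.delta)
    then show "(\<lambda>s. coeff (\<Sum>i\<le>N. monom (c i (t0(j := s))) i) i) holomorphic_on ?S"
      using hc[of i] by (cases "i \<le> N") simp_all
  qed
  have pv: "poly (\<Sum>i\<le>N. monom (c i t) i) x = (\<Sum>i\<le>N. c i t * x ^ i)" for c :: "nat \<Rightarrow> ('a \<Rightarrow> complex) \<Rightarrow> complex" and t x
    unfolding poly_sum poly_monom by (rule refl)
  show "ratf ?S X (\<lambda>s x. F (t0(j := s)) x $ a $ b)"
    unfolding ratf_def
  proof (intro exI conjI ballI)
    show "hpoly ?S (\<lambda>s. \<Sum>i\<le>N. monom (p i (t0(j := s))) i)"
      using hol assms(2) by (intro hp) blast
    show "hpoly ?S (\<lambda>s. \<Sum>i\<le>N. monom (q i (t0(j := s))) i)"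
      using hol assms(2) by (intro hp) blast
    fix s x assume s: "s \<in> ?S" and x: "x \<in> X"
    then have "t0(j := s) \<in> T" by simp
    then show "poly (\<Sum>i\<le>N. monom (q i (t0(j := s))) i) x \<noteq> 0"
      "F (t0(j := s)) x $ a $ b = poly (\<Sum>i\<le>N. monom (p i (t0(j := s))) i) x / poly (\<Sum>i\<le>N. monom (q i (t0(j := s))) i) x"
      using eq x unfolding pv by auto
  qed
qed



lemma cmscale_entry[simp]: "cmscale c A $ a $ b = c * A $ a $ b"
  by (simp add: cmscale_def)

lemma cmat_subspace_real:
  assumes "cmat_subspace g" shows "subspace g"
  unfolding subspace_def
proof (intro conjI ballI allI)
  show "0 \<in> g" using cmat.subspace_0[OF assms] .
  fix x y assume "x \<in> g" "y \<in> g" then show "x + y \<in> g" using cmat.subspace_add[OF assms] by blast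
next
  fix c :: real and x assume "x \<in> g"
  moreover have "c *\<^sub>R x = cmscale (of_real c) x"
  proof -
    have "(c *\<^sub>R x) $ a $ b = c *\<^sub>R (x $ a $ b)" for a b by simp
    also have "c *\<^sub>R (x $ a $ b) = of_real c * x $ a $ b" for a b by (rule scaleR_conv_of_real)
    finally show ?thesis by (simp add: vec_eq_iff)
  qed
  ultimately show "c *\<^sub>R x \<in> g" using cmat.subspace_scale[OF assms] by simp
qed

lemma deriv_in_g:
  fixes F :: "complex \<Rightarrow> 'n::finite cmat"
  assumes g: "cmat_subspace g" and S: "open S" "s \<in> S" and Fg: "\<forall>s\<in>S. F s \<in> g"
    and d: "\<And>a b. ((\<lambda>s. F s $ a $ b) has_field_derivative F' $ a $ b) (at s)"
  shows "F' \<in> g"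
proof (rule Lim_in_closed_set)
  show "closed g" by (rule closed_subspace[OF cmat_subspace_real[OF g]])
  show "\<forall>\<^sub>F y in at s. cmscale (1 / (y - s)) (F y - F s) \<in> g"
    using eventually_at_in_open'[OF S] 
  proof (rule eventually_mono)
    fix y assume "y \<in> S" then show "cmscale (1 / (y - s)) (F y - F s) \<in> g"
      using Fg S(2) by (intro cmat.subspace_scale[OF g] cmat.subspace_diff[OF g]) auto
  qed
  show "at s \<noteq> bot" by simp
  show "((\<lambda>y. cmscale (1 / (y - s)) (F y - F s)) \<longlongrightarrow> F') (at s)"
  proof (intro vec_tendstoI)
    fix a b
    have "((\<lambda>y. (F y $ a $ b - F s $ a $ b) / (y - s)) \<longlongrightarrow> F' $ a $ b) (at s)"
      using d[of a b] unfolding has_field_derivative_iff .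
    then show "((\<lambda>y. cmscale (1 / (y - s)) (F y - F s) $ a $ b) \<longlongrightarrow> F' $ a $ b) (at s)"
      by simp
  qed
qed

lemma Rjk_Suc_line:
  "Rjk D R j (Suc k) (t0(j:=s)) x = (\<chi> a b. deriv (\<lambda>s'. Rjk D R j k (t0(j:=s')) x $a$b) s) + mcomm (Rjk D R j k (t0(j:=s)) x) (R j (t0(j:=s)) x)"
  by (simp add: pderiv_t_def)

lemma Rjk_props:
  fixes D :: "('m \<Rightarrow> complex) \<Rightarrow> complex \<Rightarrow> 'n::finite cmat"
    and R :: "'m \<Rightarrow> ('m \<Rightarrow> complex) \<Rightarrow> complex \<Rightarrow> 'n cmat"
  assumes S: "S = {s. t0(j:=s) \<in> T}" "open S"
    and g: "cmat_subspace g" "\<forall>A\<in>g. \<forall>B\<in>g. mcomm A B \<in> g"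
    and Dg: "\<forall>t\<in>T. \<forall>x\<in>X. D t x \<in> g" and Rg: "\<forall>t\<in>T. \<forall>x\<in>X. R j t x \<in> g"
    and rD: "ratm S X (\<lambda>s x. D (t0(j:=s)) x)" and rR: "ratm S X (\<lambda>s x. R j (t0(j:=s)) x)"
  shows "ratm S X (\<lambda>s x. Rjk D R j k (t0(j:=s)) x) \<and> (\<forall>s\<in>S. \<forall>x\<in>X. Rjk D R j k (t0(j:=s)) x \<in> g)"
proof (induction k)
  case 0
  have "ratm S X (\<lambda>s x. Rjk D R j 0 (t0(j:=s)) x)" using rD by (simp only: Rjk.simps(1))
  moreover have "\<forall>s\<in>S. \<forall>x\<in>X. Rjk D R j 0 (t0(j:=s)) x \<in> g"
    using Dg S(1) by (simp only: Rjk.simps(1) mem_Collect_eq) blast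
  ultimately show ?case by blast
next
  case (Suc k)
  have eq: "(\<lambda>s x. Rjk D R j (Suc k) (t0(j:=s)) x) = (\<lambda>s x. (\<chi> a b. deriv (\<lambda>s'. Rjk D R j k (t0(j:=s')) x $a$b) s) + mcomm (Rjk D R j k (t0(j:=s)) x) (R j (t0(j:=s)) x))"
    by (simp only: Rjk_Suc_line)
  have r1: "ratm S X (\<lambda>s x. Rjk D R j (Suc k) (t0(j:=s)) x)"
  proof -
    have IHr: "ratm S X (\<lambda>s x. Rjk D R j k (t0(j:=s)) x)" using Suc.IH by blast
    show ?thesis unfolding eq by (intro ratm_add ratm_deriv ratm_mcomm S(2) IHr rR)
  qed
  have r2: "Rjk D R j (Suc k) (t0(j:=s)) x \<in> g" if s: "s \<in> S" and x: "x \<in> X" for s x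
  proof -
    have "(\<chi> a b. deriv (\<lambda>s'. Rjk D R j k (t0(j:=s')) x $a$b) s) \<in> g"
      using g(1) S(2) s
    proof (rule deriv_in_g)
      show "\<forall>s\<in>S. Rjk D R j k (t0(j := s)) x \<in> g" using Suc.IH x by blast
      show "((\<lambda>s. Rjk D R j k (t0(j := s)) x $ a $ b) has_field_derivative
          (\<chi> a b. deriv (\<lambda>s'. Rjk D R j k (t0(j := s')) x $ a $ b) s) $ a $ b) (at s)" for a b
        using ratm_has_deriv[OF S(2) _ x s, of "\<lambda>s x. Rjk D R j k (t0(j := s)) x"] Suc.IH by blast
    qed
    moreover have "mcomm (Rjk D R j k (t0(j:=s)) x) (R j (t0(j:=s)) x) \<in> g"
      using g(2) Suc.IH Rg s x S(1) by blast
    ultimately show ?thesis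
      unfolding Rjk_Suc_line by (rule cmat.subspace_add[OF g(1)])
  qed
  show ?case using r1 r2 by blast
qed



lemma mm_rdistrib: "((A::'a::comm_ring_1^'n::finite^'m::finite) + B) ** C = A ** C + B ** C"
  by (simp add: matrix_matrix_mult_def vec_eq_iff sum.distrib algebra_simps)
lemma mm_ldiff: "(A::'a::comm_ring_1^'n::finite^'m::finite) ** (B - C) = A ** B - A ** C"
  by (simp add: matrix_matrix_mult_def vec_eq_iff sum_subtractf algebra_simps)
lemma mm_rdiff: "((A::'a::comm_ring_1^'n::finite^'m::finite) - B) ** C = A ** C - B ** C"
  by (simp add: matrix_matrix_mult_def vec_eq_iff sum_subtractf algebra_simps)
lemma mm_rneg: "(A::'a::comm_ring_1^'n::finite^'m::finite) ** (- B) = - (A ** B)"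
  by (simp add: matrix_matrix_mult_def vec_eq_iff sum_negf)

lemma mhd_mult:
  fixes F G :: "complex \<Rightarrow> complex^'n::finite^'n"
  assumes "mat_has_deriv F F' s" "mat_has_deriv G G' s"
  shows "mat_has_deriv (\<lambda>s. F s ** G s) (F' ** G s + F s ** G') s"
  unfolding mat_has_deriv_def
proof (intro allI)
  fix a b
  have e: "((\<lambda>s. F s $ a $ n * G s $ n $ b) has_field_derivative F' $ a $ n * G s $ n $ b + F s $ a $ n * G' $ n $ b) (at s)" for n
  proof -
    have d1: "((\<lambda>s. F s $ a $ n) has_field_derivative F' $ a $ n) (at s)" using assms(1) unfolding mat_has_deriv_def by blast
    have d2: "((\<lambda>s. G s $ n $ b) has_field_derivative G' $ n $ b) (at s)" using assms(2) unfolding mat_has_deriv_def by blast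
    show ?thesis using DERIV_mult[OF d1 d2] by (simp only: mult.commute)
  qed
  have "((\<lambda>s. \<Sum>k\<in>UNIV. F s $ a $ k * G s $ k $ b) has_field_derivative
        (\<Sum>k\<in>UNIV. F' $ a $ k * G s $ k $ b + F s $ a $ k * G' $ k $ b)) (at s)"
    by (rule DERIV_sum) (rule e)
  then show "((\<lambda>s. (F s ** G s) $ a $ b) has_field_derivative (F' ** G s + F s ** G') $ a $ b) (at s)"
    by (simp add: matrix_matrix_mult_def sum.distrib)
qed

lemma mhd_const: "mat_has_deriv (\<lambda>s. A) 0 s"
  unfolding mat_has_deriv_def by simp

lemma mhd_trace:
  assumes "mat_has_deriv F F' s"
  shows "((\<lambda>s. trace (F s)) has_field_derivative trace F') (at s)"
  unfolding trace_def using assms unfolding mat_has_deriv_def by (intro DERIV_sum) auto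

lemma mhd_unique: "mat_has_deriv F A s \<Longrightarrow> mat_has_deriv F B s \<Longrightarrow> A = B"
  unfolding mat_has_deriv_def vec_eq_iff using DERIV_unique by blast

lemma mhd_transform:
  assumes "mat_has_deriv F F' s" "open S" "s \<in> S" "\<And>y. y \<in> S \<Longrightarrow> F y = G y"
  shows "mat_has_deriv G F' s"
  unfolding mat_has_deriv_def
proof (intro allI)
  fix a b
  have "((\<lambda>s. F s $ a $ b) has_field_derivative F' $ a $ b) (at s)"
    using assms(1) unfolding mat_has_deriv_def by blast
  then show "((\<lambda>s. G s $ a $ b) has_field_derivative F' $ a $ b) (at s)"
  proof (rule has_field_derivative_transform_within_open[OF _ assms(2,3)])
    fix y assume "y \<in> S" then show "F y $ a $ b = G y $ a $ b" using assms(4) by simp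
  qed
qed

lemma inv_props:
  assumes "invertible (A::'a::comm_ring_1^'n::finite^'n)"
  shows "A ** matrix_inv A = mat 1" "matrix_inv A ** A = mat 1"
proof -
  have "\<exists>A'. A ** A' = mat 1 \<and> A' ** A = mat 1" using assms unfolding invertible_def .
  then have "A ** matrix_inv A = mat 1 \<and> matrix_inv A ** A = mat 1"
    unfolding matrix_inv_def by (rule someI_ex)
  then show "A ** matrix_inv A = mat 1" "matrix_inv A ** A = mat 1" by auto
qed

lemma inv_entry:
  assumes "invertible (A::'a::field^'n::finite^'n)"
  shows "matrix_inv A $ k $ c = det (\<chi> i j. if j = k then (if i = c then 1 else 0) else A $ i $ j) / det A"
proof -
  have d0: "det A \<noteq> 0" using assms invertible_det_nz by blast
  let ?x = "\<chi> k. matrix_inv A $ k $ c"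
  let ?b = "\<chi> i. if i = c then (1::'a) else 0"
  have "A *v ?x = ?b"
    using inv_props(1)[OF assms]
    by (simp add: vec_eq_iff matrix_vector_mult_def matrix_matrix_mult_def mat_def)
  then have "?x = (\<chi> k. det(\<chi> i j. if j=k then ?b$i else A$i$j) / det A)"
    using cramer[OF d0] by blast
  then have "?x $ k = (\<chi> k. det(\<chi> i j. if j=k then ?b$i else A$i$j) / det A) $ k" by simp
  moreover have "(\<chi> i j. if j=k then ?b$i else A$i$j) = (\<chi> i j. if j = k then (if i = c then 1 else 0) else A $ i $ j)"
    by (simp add: vec_eq_iff)
  ultimately show ?thesis by simp
qed

lemma det_holo:
  fixes F :: "complex \<Rightarrow> complex^'n::finite^'n"
  assumes "\<And>a b. (\<lambda>s. F s $ a $ b) holomorphic_on S"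
  shows "(\<lambda>s. det (F s)) holomorphic_on S"
  unfolding det_def using assms
  by (intro holomorphic_on_sum holomorphic_on_mult holomorphic_on_const holomorphic_on_prod) auto

lemma inv_holo:
  fixes F :: "complex \<Rightarrow> complex^'n::finite^'n"
  assumes "\<And>a b. (\<lambda>s. F s $ a $ b) holomorphic_on S" "\<forall>s\<in>S. invertible (F s)"
  shows "(\<lambda>s. matrix_inv (F s) $ k $ c) holomorphic_on S"
proof -
  have "(\<lambda>s. det (\<chi> i j. if j = k then (if i = c then 1 else 0) else F s $ i $ j) / det (F s)) holomorphic_on S"
  proof (intro holomorphic_on_divide det_holo)
    fix a b show "(\<lambda>s. (\<chi> i j. if j = k then (if i = c then 1 else 0) else F s $ i $ j) $ a $ b) holomorphic_on S"
      using assms(1) by (cases "b = k") auto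
    show "\<And>a b. (\<lambda>s. F s $ a $ b) holomorphic_on S" by (rule assms(1))
    fix s assume "s \<in> S" then show "det (F s) \<noteq> 0" using assms(2) invertible_det_nz by blast
  qed
  then show ?thesis
    by (rule holomorphic_transform) (simp add: assms(2) inv_entry)
qed




lemma W1_iter:
  fixes f :: "nat \<Rightarrow> complex \<Rightarrow> complex^'n::finite^'n" and psi Rj :: "complex \<Rightarrow> complex^'n^'n"
    and w :: "complex \<Rightarrow> complex"
  assumes S: "open S"
    and inv: "\<forall>s\<in>S. invertible (psi s)"
    and dpsi: "\<forall>s\<in>S. mat_has_deriv psi (Rj s ** psi s) s"
    and fS: "\<And>k s. s \<in> S \<Longrightarrow> f (Suc k) s = (\<chi> a b. deriv (\<lambda>s. f k s $ a $ b) s) + mcomm (f k s) (Rj s)"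
    and fd: "\<And>k s a b. s \<in> S \<Longrightarrow> ((\<lambda>s. f k s $ a $ b) has_field_derivative deriv (\<lambda>s. f k s $ a $ b) s) (at s)"
    and w0: "\<forall>s\<in>S. w s = trace (f 0 s ** (psi s ** E ** matrix_inv (psi s)))"
  shows "\<forall>s\<in>S. (deriv ^^ k) w s = trace (f k s ** (psi s ** E ** matrix_inv (psi s)))"
proof -
  define V where "V s = matrix_inv (psi s)" for s
  define M where "M s = psi s ** E ** V s" for s
  have psi_holo: "(\<lambda>s. psi s $ a $ b) holomorphic_on S" for a b
    unfolding holomorphic_on_open[OF S] using dpsi unfolding mat_has_deriv_def by blast
  have V_holo: "(\<lambda>s. V s $ a $ b) holomorphic_on S" for a b
    unfolding V_def by (rule inv_holo[OF psi_holo inv])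
  define Vd where "Vd s = (\<chi> a b. deriv (\<lambda>s. V s $ a $ b) s)" for s
  have dV: "mat_has_deriv V (Vd s) s" if "s \<in> S" for s
    unfolding mat_has_deriv_def Vd_def using holomorphic_derivI[OF V_holo S that] by simp
  have Vd_eq: "Vd s = - (V s ** Rj s)" if s: "s \<in> S" for s
  proof -
    have pV: "psi y ** V y = mat 1" "V y ** psi y = mat 1" if "y \<in> S" for y
      using inv_props[of "psi y"] inv that unfolding V_def by auto
    have d1: "mat_has_deriv (\<lambda>s. psi s ** V s) ((Rj s ** psi s) ** V s + psi s ** Vd s) s"
      by (rule mhd_mult[OF dpsi[rule_format, OF s] dV[OF s]])
    have d2: "mat_has_deriv (\<lambda>s. psi s ** V s) 0 s"
      by (rule mhd_transform[OF mhd_const S s]) (simp add: pV)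
    have z: "(Rj s ** psi s) ** V s + psi s ** Vd s = 0" using mhd_unique[OF d1 d2] .
    have "V s ** ((Rj s ** psi s) ** V s + psi s ** Vd s) = 0" unfolding z by simp
    then have "V s ** Rj s ** (psi s ** V s) + (V s ** psi s) ** Vd s = 0"
      by (simp add: matrix_add_ldistrib matrix_mul_assoc)
    then have "V s ** Rj s + Vd s = 0" by (simp add: pV[OF s])
    then show ?thesis by (simp add: eq_neg_iff_add_eq_0 add.commute)
  qed
  have dM: "mat_has_deriv M (Rj s ** M s - M s ** Rj s) s" if s: "s \<in> S" for s
  proof -
    have "mat_has_deriv (\<lambda>s. psi s ** E) ((Rj s ** psi s) ** E + psi s ** 0) s"
      by (rule mhd_mult[OF dpsi[rule_format, OF s] mhd_const])
    then have "mat_has_deriv (\<lambda>s. psi s ** E ** V s) (((Rj s ** psi s) ** E + psi s ** 0) ** V s + (psi s ** E) ** Vd s) s"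
      by (rule mhd_mult[OF _ dV[OF s]])
    moreover have "((Rj s ** psi s) ** E + psi s ** 0) ** V s + (psi s ** E) ** Vd s = Rj s ** M s - M s ** Rj s"
      unfolding Vd_eq[OF s] M_def by (simp add: mm_rneg matrix_mul_assoc)
    ultimately show ?thesis unfolding M_def by simp
  qed
  define tr where "tr k s = trace (f k s ** M s)" for k s
  have dtr: "((\<lambda>s. tr k s) has_field_derivative tr (Suc k) s) (at s)" if s: "s \<in> S" for k s
  proof -
    have df: "mat_has_deriv (\<lambda>s. f k s) (\<chi> a b. deriv (\<lambda>s. f k s $ a $ b) s) s"
      unfolding mat_has_deriv_def using fd[OF s] by simp
    have "((\<lambda>s. tr k s) has_field_derivative
       trace ((\<chi> a b. deriv (\<lambda>s. f k s $ a $ b) s) ** M s + f k s ** (Rj s ** M s - M s ** Rj s))) (at s)"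
      unfolding tr_def by (rule mhd_trace[OF mhd_mult[OF df dM[OF s]]])
    moreover have "trace ((\<chi> a b. deriv (\<lambda>s. f k s $ a $ b) s) ** M s + f k s ** (Rj s ** M s - M s ** Rj s)) = tr (Suc k) s"
    proof -
      have "trace (f k s ** (M s ** Rj s)) = trace (Rj s ** f k s ** M s)"
        using trace_mul_sym[of "f k s ** M s" "Rj s"] by (simp add: matrix_mul_assoc)
      then show ?thesis
        unfolding tr_def fS[OF s] mcomm_def
        by (simp add: mm_rdistrib mm_ldiff mm_rdiff trace_add trace_sub matrix_mul_assoc)
    qed
    ultimately show ?thesis by simp
  qed
  have "\<forall>s\<in>S. (deriv ^^ k) w s = tr k s"
  proof (induction k)
    case 0 then show ?case using w0 unfolding tr_def M_def V_def by simp
  next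
    case (Suc k)
    show ?case
    proof
      fix s assume s: "s \<in> S"
      have "(deriv ^^ Suc k) w s = deriv ((deriv ^^ k) w) s" by simp
      also have "\<dots> = deriv (tr k) s"
      proof (rule deriv_cong_ev[OF _ refl])
        show "\<forall>\<^sub>F y in nhds s. (deriv ^^ k) w y = tr k y"
          using eventually_nhds_in_open[OF S s] by (rule eventually_mono) (use Suc.IH in blast)
      qed
      also have "\<dots> = tr (Suc k) s" using DERIV_imp_deriv[OF dtr[OF s, of k]] by simp
      finally show "(deriv ^^ Suc k) w s = tr (Suc k) s" .
    qed
  qed
  then show ?thesis unfolding tr_def M_def V_def .
qed



context vector_space
begin

lemma family_dependent:
  assumes I: "finite I" and T: "finite T" and c: "card T < card I" and sp: "\<forall>i\<in>I. v i \<in> span T"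
  shows "\<exists>c. (\<exists>i\<in>I. c i \<noteq> 0) \<and> (\<Sum>i\<in>I. scale (c i) (v i)) = 0"
proof (cases "inj_on v I")
  case False
  then obtain i i' where ii: "i \<in> I" "i' \<in> I" "i \<noteq> i'" "v i = v i'"
    unfolding inj_on_def by blast
  define c where "c l = (if l = i then (1::'a) else if l = i' then -1 else 0)" for l
  have "(\<Sum>l\<in>I. scale (c l) (v l)) = (\<Sum>l\<in>{i, i'}. scale (c l) (v l))"
    using ii I by (intro sum.mono_neutral_right) (auto simp: c_def)
  also have "\<dots> = 0" using ii by (simp add: c_def)
  finally show ?thesis using ii by (intro exI[of _ c]) (auto simp: c_def)
next
  case True
  have "dependent (v ` I)"
  proof (rule ccontr)
    assume ind: "\<not> dependent (v ` I)"
    have "card (v ` I) \<le> card T"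
      using independent_span_bound[OF T ind] sp by auto
    then show False using card_image[OF True] c by simp
  qed
  then obtain t u where tu: "finite t" "t \<subseteq> v ` I" "(\<Sum>w\<in>t. scale (u w) (w)) = 0" "\<exists>w\<in>t. u w \<noteq> 0"
    unfolding dependent_explicit by blast
  define c where "c i = (if v i \<in> t then u (v i) else 0)" for i
  have "(\<Sum>i\<in>I. scale (c i) (v i)) = (\<Sum>w\<in>v ` I. scale ((if w \<in> t then u w else 0)) (w))"
    by (simp add: sum.reindex[OF True] c_def)
  also have "\<dots> = (\<Sum>w\<in>t. scale ((if w \<in> t then u w else 0)) (w))"
    using tu(2) I by (intro sum.mono_neutral_right) auto
  also have "\<dots> = 0" using tu(3) by simp
  finally have "(\<Sum>i\<in>I. scale (c i) (v i)) = 0" .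
  moreover obtain w where "w \<in> t" "u w \<noteq> 0" using tu(4) by blast
  then obtain i where "i \<in> I" "v i = w" using tu(2) by blast
  then have "c i \<noteq> 0" using \<open>w \<in> t\<close> \<open>u w \<noteq> 0\<close> by (simp add: c_def)
  ultimately show ?thesis using \<open>i \<in> I\<close> by blast
qed

end

definition fscale :: "complex \<Rightarrow> (complex \<Rightarrow> 'n::finite cmat) \<Rightarrow> (complex \<Rightarrow> 'n cmat)" where
  "fscale c f = (\<lambda>z. cmscale c (f z))"

global_interpretation fs: vector_space "fscale :: complex \<Rightarrow> (complex \<Rightarrow> 'n::finite cmat) \<Rightarrow> _"
  by unfold_locales (simp_all add: fscale_def fun_eq_iff cmscale_def vec_eq_iff algebra_simps)

lemma fsum_apply: "(\<Sum>i\<in>A. f i) z = (\<Sum>i\<in>A. f i z)"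
  by (induction A rule: infinite_finite_induct) auto

lemma cmat_finite_span: "\<exists>U. finite (U :: 'n::finite cmat set) \<and> card U \<le> CARD('n) * CARD('n) \<and> (\<forall>A. A \<in> cmat.span U)"
proof -
  define e where "e ab = (\<chi> i j. if i = fst ab \<and> j = snd ab then (1::complex) else 0)" for ab :: "'n \<times> 'n"
  let ?U = "e ` UNIV"
  have "A \<in> cmat.span ?U" for A :: "'n cmat"
  proof -
    have "A = (\<Sum>ab\<in>UNIV. cmscale (A $ fst ab $ snd ab) (e ab))"
    proof -
      have "(\<Sum>ab\<in>UNIV. cmscale (A $ fst ab $ snd ab) (e ab)) $ i $ j = A $ i $ j" for i j
      proof -
        have "(\<Sum>ab\<in>UNIV. cmscale (A $ fst ab $ snd ab) (e ab)) $ i $ j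
            = (\<Sum>ab\<in>UNIV. if ab = (i, j) then A $ i $ j else 0)"
          unfolding sum_component by (intro sum.cong) (auto simp: e_def)
        also have "\<dots> = A $ i $ j" by simp
        finally show ?thesis .
      qed
      then show ?thesis by (simp add: vec_eq_iff)
    qed
    also have "\<dots> \<in> cmat.span ?U"
      by (intro cmat.span_sum cmat.span_scale cmat.span_base) auto
    finally show ?thesis .
  qed
  moreover have "card ?U \<le> CARD('n) * CARD('n)"
  proof -
    have "card (UNIV :: ('n \<times> 'n) set) = CARD('n) * CARD('n)"
      by (simp add: UNIV_Times_UNIV[symmetric] card_cartesian_product del: UNIV_Times_UNIV)
    then show ?thesis using card_image_le[of "UNIV :: ('n \<times> 'n) set" e] by simp
  qed
  ultimately show ?thesis by (intro exI[of _ ?U]) auto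
qed

lemma cmat_indep_finite:
  assumes "cmat.independent (B :: 'n::finite cmat set)" shows "finite B"
proof -
  obtain U where U: "finite (U :: 'n cmat set)" "\<forall>A. A \<in> cmat.span U" using cmat_finite_span by blast
  show ?thesis using cmat.independent_span_bound[OF U(1) assms] U(2) by blast
qed



lemma poly_zero_many_roots:
  fixes p :: "complex poly"
  assumes "finite Z" "card Z > degree p" "\<forall>z\<in>Z. poly p z = 0"
  shows "p = 0"
proof (rule ccontr)
  assume p: "p \<noteq> 0"
  have "Z \<subseteq> {x. poly p x = 0}" using assms(3) by auto
  then have "card Z \<le> card {x. poly p x = 0}" by (intro card_mono poly_roots_finite p)
  also have "\<dots> \<le> degree p" by (rule card_poly_roots_bound[OF p])
  finally show False using assms(2) by simp
qed

lemma LA_poly: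
  fixes P :: "nat \<Rightarrow> complex \<Rightarrow> 'n::finite cmat" and pp :: "nat \<Rightarrow> 'n \<Rightarrow> 'n \<Rightarrow> complex poly"
  assumes g: "cmat_subspace g" and Xinf: "infinite X"
    and Pg: "\<forall>k\<le>d. \<forall>x\<in>X. P k x \<in> g"
    and Pp: "\<forall>k\<le>d. \<forall>x\<in>X. \<forall>a b. P k x $ a $ b = poly (pp k a b) x"
    and d: "d = cmat_dim g"
  shows "\<exists>\<beta>. (\<exists>k\<le>d. \<beta> k \<noteq> 0) \<and> (\<forall>x\<in>X. (\<Sum>k\<le>d. cmscale (poly (\<beta> k) x) (P k x)) = 0)"
proof -
  obtain B where B: "B \<subseteq> g" "cmat.independent B" "g \<subseteq> cmat.span B" "card B = cmat_dim g"
    using cmat.basis_exists by blast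
  have Bfin: "finite B" by (rule cmat_indep_finite[OF B(2)])
  define e where "e = (\<Sum>k\<le>d. \<Sum>a\<in>UNIV. \<Sum>b\<in>UNIV. degree (pp k a b))"
  have dege: "degree (pp k a b) \<le> e" if "k \<le> d" for k a b
  proof -
    have "degree (pp k a b) \<le> (\<Sum>b\<in>UNIV. degree (pp k a b))" by (rule member_le_sum) auto
    also have "\<dots> \<le> (\<Sum>a\<in>UNIV. \<Sum>b\<in>UNIV. degree (pp k a b))" by (rule member_le_sum[where f="\<lambda>a. \<Sum>b\<in>UNIV. degree (pp k a b)"]) auto
    also have "\<dots> \<le> e" unfolding e_def using that by (intro member_le_sum[where f="\<lambda>k. \<Sum>a\<in>UNIV. \<Sum>b\<in>UNIV. degree (pp k a b)"]) auto
    finally show ?thesis .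
  qed
  define m where "m = d * e"
  define N where "N = m + e"
  obtain Z where Z: "finite Z" "card Z = Suc N" "Z \<subseteq> X"
    using infinite_arbitrarily_large[OF Xinf] by blast
  define \<delta> :: "complex \<Rightarrow> 'n cmat \<Rightarrow> complex \<Rightarrow> 'n cmat" where "\<delta> z0 w = (\<lambda>z. if z = z0 then w else 0)" for z0 w
  define TT where "TT = (\<lambda>(z0, b). \<delta> z0 b) ` (Z \<times> B)"
  have TTfin: "finite TT" unfolding TT_def using Z(1) Bfin by simp
  have TTcard: "card TT \<le> Suc N * d"
  proof -
    have "card TT \<le> card (Z \<times> B)" unfolding TT_def using Z(1) Bfin by (intro card_image_le) simp
    also have "\<dots> = Suc N * d" using Z(2) B(4) d by (simp add: card_cartesian_product)
    finally show ?thesis .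
  qed
  have inspan: "f \<in> fs.span TT" if f: "\<forall>z\<in>Z. f z \<in> g" "\<forall>z. z \<notin> Z \<longrightarrow> f z = 0" for f
  proof -
    have fe: "f = (\<Sum>z0\<in>Z. \<delta> z0 (f z0))"
    proof
      fix z
      have "(\<Sum>z0\<in>Z. \<delta> z0 (f z0)) z = (\<Sum>z0\<in>Z. if z = z0 then f z0 else 0)"
        unfolding fsum_apply \<delta>_def by (rule refl)
      also have "\<dots> = (if z \<in> Z then f z else 0)" using Z(1) by (simp add: sum.delta')
      also have "\<dots> = f z" using f(2) by auto
      finally show "f z = (\<Sum>z0\<in>Z. \<delta> z0 (f z0)) z" by simp
    qed
    have "\<delta> z0 (f z0) \<in> fs.span TT" if z0: "z0 \<in> Z" for z0
    proof -
      have "f z0 \<in> cmat.span B" using f(1) z0 B(3) by blast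
      then obtain u where u: "f z0 = (\<Sum>b\<in>B. cmscale (u b) b)"
        unfolding cmat.span_finite[OF Bfin] by blast
      have "\<delta> z0 (f z0) = (\<Sum>b\<in>B. fscale (u b) (\<delta> z0 b))"
      proof
        fix z show "\<delta> z0 (f z0) z = (\<Sum>b\<in>B. fscale (u b) (\<delta> z0 b)) z"
          unfolding fsum_apply u by (simp add: \<delta>_def fscale_def cmat.scale_zero_right)
      qed
      also have "\<dots> \<in> fs.span TT"
        using z0 by (intro fs.span_sum fs.span_scale fs.span_base) (auto simp: TT_def)
      finally show ?thesis .
    qed
    then have "(\<Sum>z0\<in>Z. \<delta> z0 (f z0)) \<in> fs.span TT" by (intro fs.span_sum)
    then show ?thesis using fe by simp
  qed
  define v where "v ki = (\<lambda>z. if z \<in> Z then cmscale (z ^ snd ki) (P (fst ki) z) else 0)" for ki :: "nat \<times> nat"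
  define I where "I = {..d} \<times> {..m}"
  have Ifin: "finite I" unfolding I_def by simp
  have Icard: "card I = Suc d * Suc m" unfolding I_def by (simp add: card_cartesian_product)
  have lt: "card TT < card I"
  proof -
    have "Suc N * d < Suc d * Suc m" unfolding N_def m_def by (simp add: algebra_simps)
    then show ?thesis using TTcard Icard by linarith
  qed
  have vsp: "\<forall>i\<in>I. v i \<in> fs.span TT"
  proof
    fix ki assume ki: "ki \<in> I"
    show "v ki \<in> fs.span TT"
    proof (rule inspan)
      show "\<forall>z\<in>Z. v ki z \<in> g"
        using ki Z(3) Pg unfolding v_def I_def by (auto intro!: cmat.subspace_scale[OF g])
      show "\<forall>z. z \<notin> Z \<longrightarrow> v ki z = 0" unfolding v_def by simp
    qed
  qed
  obtain c where c: "\<exists>i\<in>I. c i \<noteq> 0" "(\<Sum>i\<in>I. fscale (c i) (v i)) = 0"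
    using fs.family_dependent[OF Ifin TTfin lt vsp] by blast
  define \<beta> where "\<beta> k = (\<Sum>i\<le>m. monom (c (k, i)) i)" for k
  have cb: "coeff (\<beta> k) i = (if i \<le> m then c (k, i) else 0)" for k i
    unfolding \<beta>_def coeff_sum coeff_monom by (simp add: sum.delta)
  have degb: "degree (\<beta> k) \<le> m" for k
    unfolding \<beta>_def by (intro degree_sum_le) (auto intro: order_trans[OF degree_monom_le])
  have pb: "poly (\<beta> k) z = (\<Sum>i\<le>m. c (k, i) * z ^ i)" for k z
    unfolding \<beta>_def poly_sum poly_monom by (rule refl)
  have nz: "\<exists>k\<le>d. \<beta> k \<noteq> 0"
  proof -
    obtain k i where "(k, i) \<in> I" "c (k, i) \<noteq> 0" using c(1) by auto
    then have "k \<le> d" "coeff (\<beta> k) i \<noteq> 0" unfolding I_def by (auto simp: cb)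
    then show ?thesis by auto
  qed
  define E where "E a b = (\<Sum>k\<le>d. \<beta> k * pp k a b)" for a b
  have degE: "degree (E a b) \<le> N" for a b
    unfolding E_def N_def
  proof (intro degree_sum_le)
    fix k assume "k \<in> {..d}"
    then show "degree (\<beta> k * pp k a b) \<le> m + e"
      using degb[of k] dege[of k a b] degree_mult_le[of "\<beta> k" "pp k a b"] by simp
  qed simp
  have polyE: "poly (E a b) x = (\<Sum>k\<le>d. cmscale (poly (\<beta> k) x) (P k x)) $ a $ b" if x: "x \<in> X" for a b x
    unfolding E_def poly_sum poly_mult sum_component using Pp x by simp
  have Ez: "poly (E a b) z = 0" if z: "z \<in> Z" for a b z
  proof -
    have "(\<Sum>i\<in>I. fscale (c i) (v i)) z $ a $ b = 0" using c(2) by simp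
    then have "(\<Sum>i\<in>I. c i * (z ^ snd i * P (fst i) z $ a $ b)) = 0"
      unfolding fsum_apply sum_component using z by (simp add: fscale_def v_def mult.assoc)
    then have "(\<Sum>k\<le>d. \<Sum>i\<le>m. c (k, i) * (z ^ i * P k z $ a $ b)) = 0"
      unfolding I_def sum.cartesian_product by (simp add: case_prod_beta)
    then have "(\<Sum>k\<le>d. poly (\<beta> k) z * P k z $ a $ b) = 0"
      unfolding pb sum_distrib_right by (simp add: mult.assoc)
    then show ?thesis using polyE[of z a b] z Z(3) by (auto simp: sum_component)
  qed
  have E0: "E a b = 0" for a b
  proof (rule poly_zero_many_roots[OF Z(1)])
    show "degree (E a b) < card Z" using degE[of a b] Z(2) by simp
    show "\<forall>z\<in>Z. poly (E a b) z = 0" using Ez by blast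
  qed
  have "\<forall>x\<in>X. (\<Sum>k\<le>d. cmscale (poly (\<beta> k) x) (P k x)) = 0"
  proof
    fix x assume x: "x \<in> X"
    show "(\<Sum>k\<le>d. cmscale (poly (\<beta> k) x) (P k x)) = 0"
      unfolding vec_eq_iff using polyE[OF x] E0 by simp
  qed
  then show ?thesis using nz by blast
qed



lemma trace_lin:
  fixes A :: "nat \<Rightarrow> complex^'n::finite^'n"
  shows "trace ((\<Sum>k\<in>K. cmscale (c k) (A k)) ** M) = (\<Sum>k\<in>K. c k * trace (A k ** M))"
proof -
  have "trace ((\<Sum>k\<in>K. cmscale (c k) (A k)) ** M) = (\<Sum>i\<in>UNIV. \<Sum>l\<in>UNIV. \<Sum>k\<in>K. c k * A k $ i $ l * M $ l $ i)"
    by (simp add: trace_def matrix_matrix_mult_def sum_component sum_distrib_right mult.assoc)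
  also have "\<dots> = (\<Sum>k\<in>K. \<Sum>i\<in>UNIV. \<Sum>l\<in>UNIV. c k * A k $ i $ l * M $ l $ i)"
    by (simp add: sum.swap[of _ K])
  also have "\<dots> = (\<Sum>k\<in>K. c k * trace (A k ** M))"
    by (simp add: trace_def matrix_matrix_mult_def sum_distrib_left mult.assoc)
  finally show ?thesis .
qed

lemma line_open:
  assumes "open (T :: ('m \<Rightarrow> complex) set)"
  shows "open {s. t0(j := s) \<in> T}"
proof -
  have "continuous_on UNIV (\<lambda>s::complex. t0(j := s))"
  proof (rule continuous_on_coordinatewise_then_product)
    fix i show "continuous_on UNIV (\<lambda>s::complex. (t0(j := s)) i)"
      by (cases "i = j") (simp_all add: continuous_on_id continuous_on_const)
  qed
  then have "open ((\<lambda>s::complex. t0(j := s)) -` T)" using assms by (intro open_vimage) auto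
  then show ?thesis by (simp add: vimage_def)
qed


lemma per_t:
  fixes g :: "'n::finite cmat set"
    and T :: "('m \<Rightarrow> complex) set" and X :: "complex set"
    and D :: "('m \<Rightarrow> complex) \<Rightarrow> complex \<Rightarrow> 'n cmat"
    and R :: "'m \<Rightarrow> ('m \<Rightarrow> complex) \<Rightarrow> complex \<Rightarrow> 'n cmat"
    and Psi :: "('m \<Rightarrow> complex) \<Rightarrow> complex \<Rightarrow> 'n cmat"
    and j :: 'm
  assumes g: "cmat_subspace g" "\<forall>A\<in>g. \<forall>B\<in>g. mcomm A B \<in> g"
    and T: "open T" and X: "open X"
    and Dg: "\<forall>t\<in>T. \<forall>x\<in>X. D t x \<in> g"
    and Rg: "\<forall>k. \<forall>t\<in>T. \<forall>x\<in>X. R k t x \<in> g"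
    and rD: "rational_in_x T X D" and rR: "\<forall>k. rational_in_x T X (R k)"
    and inv: "\<forall>t\<in>T. \<forall>x\<in>X. invertible (Psi t x)"
    and dPsi: "\<forall>k. \<forall>t\<in>T. \<forall>x\<in>X. mat_has_deriv (\<lambda>s. Psi (t(k := s)) x) (R k t x ** Psi t x) (t k)"
    and t0: "t0 \<in> T"
  shows "\<exists>a. (\<exists>k\<le>cmat_dim g. a k \<noteq> 0) \<and>
     (\<forall>x\<in>X. (\<Sum>k\<le>cmat_dim g. cmscale (poly (a k) x) (Rjk D R j k t0 x)) = 0) \<and>
     (\<forall>E\<in>g. \<forall>x\<in>X. (\<Sum>k\<le>cmat_dim g. poly (a k) x * pderiv_t_iter j k (\<lambda>t'. W1 D Psi t' x E) t0) = 0)"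
proof -
  define S where "S = {s. t0(j := s) \<in> T}"
  define d where "d = cmat_dim g"
  have Sopen: "open S" unfolding S_def by (rule line_open[OF T])
  have t0j: "t0(j := t0 j) = t0" by simp
  have s0: "t0 j \<in> S" unfolding S_def using t0 by simp
  have props: "ratm S X (\<lambda>s x. Rjk D R j k (t0(j:=s)) x) \<and> (\<forall>s\<in>S. \<forall>x\<in>X. Rjk D R j k (t0(j:=s)) x \<in> g)" for k
  proof (rule Rjk_props[OF S_def Sopen g])
    show "\<forall>t\<in>T. \<forall>x\<in>X. D t x \<in> g" by (rule Dg)
    show "\<forall>t\<in>T. \<forall>x\<in>X. R j t x \<in> g" using Rg by blast
    show "ratm S X (\<lambda>s. D (t0(j := s)))" unfolding S_def by (rule ratm_base[OF rD t0])
    show "ratm S X (\<lambda>s. R j (t0(j := s)))" unfolding S_def by (rule ratm_base[OF rR[rule_format] t0])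
  qed
  have rel: "\<exists>a. (\<exists>k\<le>d. a k \<noteq> 0) \<and> (\<forall>x\<in>X. (\<Sum>k\<le>d. cmscale (poly (a k) x) (Rjk D R j k t0 x)) = 0)"
  proof (cases "X = {}")
    case True
    then show ?thesis by (intro exI[of _ "\<lambda>k. 1"]) auto
  next
    case False
    then have Xinf: "infinite X" using finite_imp_not_open X by blast
    have ex: "\<exists>pq. \<forall>x\<in>X. poly (snd pq) x \<noteq> 0 \<and> Rjk D R j k t0 x $ a $ b = poly (fst pq) x / poly (snd pq) x" for k a b
    proof -
      have "ratf S X (\<lambda>s x. Rjk D R j k (t0(j:=s)) x $ a $ b)" using props[of k] unfolding ratm_def by blast
      then obtain P Q where PQ: "\<forall>s\<in>S. \<forall>x\<in>X. poly (Q s) x \<noteq> 0 \<and> Rjk D R j k (t0(j:=s)) x $ a $ b = poly (P s) x / poly (Q s) x"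
        unfolding ratf_def by blast
      show ?thesis using PQ[rule_format, OF s0] unfolding t0j by (intro exI[of _ "(P (t0 j), Q (t0 j))"]) simp
    qed
    define pq where "pq k a b = (SOME pq. \<forall>x\<in>X. poly (snd pq) x \<noteq> 0 \<and> Rjk D R j k t0 x $ a $ b = poly (fst pq) x / poly (snd pq) x)" for k a b
    define p where "p k a b = fst (pq k a b)" for k a b
    define q where "q k a b = snd (pq k a b)" for k a b
    have pqx: "\<forall>x\<in>X. poly (q k a b) x \<noteq> 0 \<and> Rjk D R j k t0 x $ a $ b = poly (p k a b) x / poly (q k a b) x" for k a b
      unfolding p_def q_def pq_def by (rule someI_ex[OF ex])
    define Qc where "Qc = (\<Prod>k\<le>d. \<Prod>a\<in>UNIV. \<Prod>b\<in>UNIV. q k a b)"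
    have qdvd: "q k a b dvd Qc" if "k \<le> d" for k a b
    proof -
      have "q k a b dvd (\<Prod>b\<in>UNIV. q k a b)" by (rule dvd_prodI) auto
      also have "\<dots> dvd (\<Prod>a\<in>UNIV. \<Prod>b\<in>UNIV. q k a b)" by (rule dvd_prodI[where f="\<lambda>a. \<Prod>b\<in>UNIV. q k a b"]) auto
      also have "\<dots> dvd Qc" unfolding Qc_def using that by (intro dvd_prodI[where f="\<lambda>k. \<Prod>a\<in>UNIV. \<Prod>b\<in>UNIV. q k a b"]) auto
      finally show ?thesis .
    qed
    obtain x0 where x0: "x0 \<in> X" using False by blast
    have Qc0: "Qc \<noteq> 0"
    proof
      assume "Qc = 0"
      then have "poly Qc x0 = 0" by simp
      then show False unfolding Qc_def poly_prod using pqx x0 by (simp add: prod_zero_iff)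
    qed
    define pp where "pp k a b = p k a b * (Qc div q k a b)" for k a b
    define PP where "PP k x = cmscale (poly Qc x) (Rjk D R j k t0 x)" for k x
    have PPg: "\<forall>k\<le>d. \<forall>x\<in>X. PP k x \<in> g"
      unfolding PP_def using props s0 unfolding t0j
      by (auto intro!: cmat.subspace_scale[OF g(1)] simp del: fun_upd_triv) (metis t0j)
    have PPp: "\<forall>k\<le>d. \<forall>x\<in>X. \<forall>a b. PP k x $ a $ b = poly (pp k a b) x"
    proof (intro allI impI ballI)
      fix k a b x assume k: "k \<le> d" and x: "x \<in> X"
      have Qe: "poly Qc x = poly (q k a b) x * poly (Qc div q k a b) x"
        using dvd_mult_div_cancel[OF qdvd[OF k, of a b]] by (metis poly_mult)
      have qn: "poly (q k a b) x \<noteq> 0" using pqx x by blast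
      show "PP k x $ a $ b = poly (pp k a b) x"
        unfolding PP_def pp_def cmscale_entry using pqx x qn by (simp add: Qe poly_mult)
    qed
    obtain \<beta> where \<beta>: "\<exists>k\<le>d. \<beta> k \<noteq> 0" "\<forall>x\<in>X. (\<Sum>k\<le>d. cmscale (poly (\<beta> k) x) (PP k x)) = 0"
      using LA_poly[OF g(1) Xinf PPg PPp d_def] by blast
    show ?thesis
    proof (intro exI[of _ "\<lambda>k. \<beta> k * Qc"] conjI)
      show "\<exists>k\<le>d. \<beta> k * Qc \<noteq> 0" using \<beta>(1) Qc0 by auto
      show "\<forall>x\<in>X. (\<Sum>k\<le>d. cmscale (poly (\<beta> k * Qc) x) (Rjk D R j k t0 x)) = 0"
        using \<beta>(2) unfolding PP_def by (simp add: cmat.scale_scale poly_mult)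
    qed
  qed
  then obtain a where a: "\<exists>k\<le>d. a k \<noteq> 0" "\<forall>x\<in>X. (\<Sum>k\<le>d. cmscale (poly (a k) x) (Rjk D R j k t0 x)) = 0"
    by blast
  have W: "(\<Sum>k\<le>d. poly (a k) x * pderiv_t_iter j k (\<lambda>t'. W1 D Psi t' x E) t0) = 0" if x: "x \<in> X" for E x
  proof -
    define psi where "psi s = Psi (t0(j := s)) x" for s
    define Rj where "Rj s = R j (t0(j := s)) x" for s
    have it: "\<forall>s\<in>S. (deriv ^^ k) (\<lambda>s. W1 D Psi (t0(j := s)) x E) s = trace (Rjk D R j k (t0(j := s)) x ** (psi s ** E ** matrix_inv (psi s)))" for k
    proof (rule W1_iter[where f="\<lambda>k s. Rjk D R j k (t0(j := s)) x" and Rj=Rj, OF Sopen])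
      show "\<forall>s\<in>S. invertible (psi s)" unfolding psi_def S_def using inv x by blast
      show "\<forall>s\<in>S. mat_has_deriv psi (Rj s ** psi s) s"
      proof
        fix s assume "s \<in> S"
        then have "t0(j := s) \<in> T" unfolding S_def by simp
        from dPsi[rule_format, OF this x, of j] show "mat_has_deriv psi (Rj s ** psi s) s"
          unfolding psi_def Rj_def by simp
      qed
      show "Rjk D R j (Suc k) (t0(j := s)) x = (\<chi> a b. deriv (\<lambda>s. Rjk D R j k (t0(j := s)) x $ a $ b) s) + mcomm (Rjk D R j k (t0(j := s)) x) (Rj s)" for k s
        unfolding Rj_def by (rule Rjk_Suc_line)
      show "((\<lambda>s. Rjk D R j k (t0(j := s)) x $ a $ b) has_field_derivative deriv (\<lambda>s. Rjk D R j k (t0(j := s)) x $ a $ b) s) (at s)"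
        if "s \<in> S" for k s a b
        using ratm_has_deriv[OF Sopen _ x that, of "\<lambda>s x. Rjk D R j k (t0(j := s)) x" a b] props[of k] by simp
      show "\<forall>s\<in>S. W1 D Psi (t0(j := s)) x E = trace (Rjk D R j 0 (t0(j := s)) x ** (psi s ** E ** matrix_inv (psi s)))"
        unfolding psi_def W1_def Mfun_def by simp
    qed
    define M0 where "M0 = Psi t0 x ** E ** matrix_inv (Psi t0 x)"
    have pk: "pderiv_t_iter j k (\<lambda>t'. W1 D Psi t' x E) t0 = trace (Rjk D R j k t0 x ** M0)" for k
      using it[of k, rule_format, OF s0] unfolding pderiv_t_iter_def M0_def psi_def t0j .
    have "(\<Sum>k\<le>d. poly (a k) x * pderiv_t_iter j k (\<lambda>t'. W1 D Psi t' x E) t0)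
        = trace ((\<Sum>k\<le>d. cmscale (poly (a k) x) (Rjk D R j k t0 x)) ** M0)"
      unfolding pk trace_lin ..
    also have "\<dots> = 0" using a(2) x by (simp add: trace_def)
    finally show ?thesis .
  qed
  show ?thesis using a W unfolding d_def by blast
qed


theorem mainTheorem5:
  fixes G g :: "'n::finite cmat set"
    and T :: "('m \<Rightarrow> complex) set" and X :: "complex set"
    and D :: "('m \<Rightarrow> complex) \<Rightarrow> complex \<Rightarrow> 'n cmat"
    and R :: "'m \<Rightarrow> ('m \<Rightarrow> complex) \<Rightarrow> complex \<Rightarrow> 'n cmat"
    and Psi :: "('m \<Rightarrow> complex) \<Rightarrow> complex \<Rightarrow> 'n cmat"
    and j :: 'm
  assumes "reductive_matrix_group G g"
    and "open T" and "open X"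
    and "\<forall>t\<in>T. \<forall>x\<in>X. D t x \<in> g"
    and "\<forall>k. \<forall>t\<in>T. \<forall>x\<in>X. R k t x \<in> g"
    and "rational_in_x T X D" and "\<forall>k. rational_in_x T X (R k)"
    and "holo_in_t T X D" and "\<forall>k. holo_in_t T X (R k)"
    and "\<forall>t\<in>T. \<forall>x\<in>X. Psi t x \<in> G \<and> invertible (Psi t x)"
    and "\<forall>t\<in>T. \<forall>x\<in>X. mat_has_deriv (\<lambda>y. Psi t y) (D t x ** Psi t x) x"
    and "\<forall>k. \<forall>t\<in>T. \<forall>x\<in>X. mat_has_deriv (\<lambda>s. Psi (t(k := s)) x) (R k t x ** Psi t x) (t k)"
  shows "\<exists>\<alpha> :: nat \<Rightarrow> ('m \<Rightarrow> complex) \<Rightarrow> complex poly.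
     (\<forall>t\<in>T. \<exists>k\<le>cmat_dim g. \<alpha> k t \<noteq> 0) \<and>
     (\<forall>t\<in>T. \<forall>x\<in>X. (\<Sum>k\<le>cmat_dim g. cmscale (poly (\<alpha> k t) x) (Rjk D R j k t x)) = 0) \<and>
     (\<forall>E\<in>g. \<forall>t\<in>T. \<forall>x\<in>X.
        (\<Sum>k\<le>cmat_dim g. poly (\<alpha> k t) x * pderiv_t_iter j k (\<lambda>t'. W1 D Psi t' x E) t) = 0)"
proof -
  have sub: "cmat_subspace g" "\<forall>A\<in>g. \<forall>B\<in>g. mcomm A B \<in> g"
    using assms(1) unfolding reductive_matrix_group_def reductive_lie_algebra_def lie_subalgebra_def by blast+
  have inv: "\<forall>t\<in>T. \<forall>x\<in>X. invertible (Psi t x)" using assms(10) by blast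
  have "\<forall>t\<in>T. \<exists>a. (\<exists>k\<le>cmat_dim g. a k \<noteq> 0) \<and>
     (\<forall>x\<in>X. (\<Sum>k\<le>cmat_dim g. cmscale (poly (a k) x) (Rjk D R j k t x)) = 0) \<and>
     (\<forall>E\<in>g. \<forall>x\<in>X. (\<Sum>k\<le>cmat_dim g. poly (a k) x * pderiv_t_iter j k (\<lambda>t'. W1 D Psi t' x E) t) = 0)"
    using per_t[OF sub assms(2,3,4,5,6,7) inv assms(12)] by blast
  then obtain a where a: "\<forall>t\<in>T. (\<exists>k\<le>cmat_dim g. a t k \<noteq> 0) \<and>
     (\<forall>x\<in>X. (\<Sum>k\<le>cmat_dim g. cmscale (poly (a t k) x) (Rjk D R j k t x)) = 0) \<and>
     (\<forall>E\<in>g. \<forall>x\<in>X. (\<Sum>k\<le>cmat_dim g. poly (a t k) x * pderiv_t_iter j k (\<lambda>t'. W1 D Psi t' x E) t) = 0)"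
    by (rule bchoice[elim_format]) blast
  show ?thesis
    by (rule exI[of _ "\<lambda>k t. a t k"]) (use a in blast)
qed

end
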